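(* Let $L_1=\langle\mathbf{A}_1,F_1\rangle$ and $L_2=\langle\mathbf{A}_2,F_2\rangle$ be two distinct finite matrix logics over the same signature $\Theta$ such that $\mathbf{A}_2$ is a subalgebra of $\mathbf{A}_1$ and $F_2=F_1\cap A_2$. Assume: (1) $A_1=\{0,1,a_1,\dots,a_k,a_{k+1},\dots,a_n\}$ and $A_2=\{0,1,a_1,\dots,a_k\}$ (all listed elements distinct), $0\notin F_1$, $1\in F_2$, and $\{0,1\}$ is (the universe of) a subalgebra of $\mathbf{A}_2$; (2) there are formulas $\top(p)$ and $\bot(p)$ in $\mathcal{L}(\Theta)$ containing at most the variable $p$ such that $e(\top(p))=1$ and $e(\bot(p))=0$ for every evaluation $e$ into $\mathbf{A}_1$; (3) for every $k+1\le i\le n$ and every $1\le j\le n$ with $i\neq j$ there is a formula $\alpha^i_j(p)$ containing at most the variable $p$ such that for every evaluation $e$ into $\mathbf{A}_1$, $e(p)=a_i$ implies $e(\alpha^i_j(p))=a_j$. Then $L_1$ is maximal with respect to $L_2$.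
   Context: $\mathcal{L}(\Theta)$ denotes the algebra of formulas over a propositional signature $\Theta$ generated by a countable set of propositional variables. A logical matrix is a pair $\langle\mathbf{A},F\rangle$ with $\mathbf{A}$ an algebra over $\Theta$ and $\emptyset\neq F\subseteq A$. The matrix logic $L=\langle\mathbf{A},F\rangle$ has consequence relation: $\Gamma\vdash_L\varphi$ iff for every homomorphism $e:\mathcal{L}(\Theta)\to\mathbf{A}$ (evaluation), $e[\Gamma]\subseteq F$ implies $e(\varphi)\in F$. A logic $L_1$ is a proper sublogic of $L_2$ (same signature) if ${\vdash_{L_1}}\subsetneq{\vdash_{L_2}}$. For a formula $\varphi$, $L_1^+$ denotes the logic with $\Gamma\vdash_{L_1^+}\psi$ iff $\Gamma\cup\{\sigma(\varphi):\sigma$ a substitution$\}\vdash_{L_1}\psi$. $L_1$ is maximal with respect to $L_2$ if $L_1$ is a proper sublogic of $L_2$ and for every formula $\varphi$ with $\vdash_{L_2}\varphi$ but $\nvdash_{L_1}\varphi$, the logic $L_1^+$ obtained by adding $\varphi$ coincides with $L_2$. *)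

theory Defs
  imports Main
begin

datatype 'f fm = Var nat | App 'f "'f fm list"

fun wf_fm :: "('f \<Rightarrow> nat) \<Rightarrow> 'f fm \<Rightarrow> bool" where
  "wf_fm ar (Var n) = True"
| "wf_fm ar (App f xs) = (length xs = ar f \<and> (\<forall>x\<in>set xs. wf_fm ar x))"

fun vars :: "'f fm \<Rightarrow> nat set" where
  "vars (Var n) = {n}"
| "vars (App f xs) = (\<Union>x\<in>set xs. vars x)"

fun eval :: "('f \<Rightarrow> 'a list \<Rightarrow> 'a) \<Rightarrow> (nat \<Rightarrow> 'a) \<Rightarrow> 'f fm \<Rightarrow> 'a" where
  "eval ops v (Var n) = v n"
| "eval ops v (App f xs) = ops f (map (eval ops v) xs)"

fun subst :: "(nat \<Rightarrow> 'f fm) \<Rightarrow> 'f fm \<Rightarrow> 'f fm" where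
  "subst \<sigma> (Var n) = \<sigma> n"
| "subst \<sigma> (App f xs) = App f (map (subst \<sigma>) xs)"

text \<open>A is (the universe of) an algebra over the signature with operations ops.
  A subalgebra of it is any subset closed under the same operations.\<close>
definition closed_alg :: "('f \<Rightarrow> nat) \<Rightarrow> ('f \<Rightarrow> 'a list \<Rightarrow> 'a) \<Rightarrow> 'a set \<Rightarrow> bool" where
  "closed_alg ar ops A \<longleftrightarrow> A \<noteq> {} \<and>
     (\<forall>f xs. length xs = ar f \<longrightarrow> set xs \<subseteq> A \<longrightarrow> ops f xs \<in> A)"

definition cons_rel :: "('f \<Rightarrow> nat) \<Rightarrow> ('f \<Rightarrow> 'a list \<Rightarrow> 'a) \<Rightarrow> 'a set \<Rightarrow> 'a set
    \<Rightarrow> ('f fm set \<times> 'f fm) set" where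
  "cons_rel ar ops A F = {(\<Gamma>, \<phi>). (\<forall>\<gamma>\<in>\<Gamma>. wf_fm ar \<gamma>) \<and> wf_fm ar \<phi> \<and>
     (\<forall>v. (\<forall>n. v n \<in> A) \<longrightarrow> (\<forall>\<gamma>\<in>\<Gamma>. eval ops v \<gamma> \<in> F) \<longrightarrow> eval ops v \<phi> \<in> F)}"

definition cons_plus :: "('f \<Rightarrow> nat) \<Rightarrow> ('f \<Rightarrow> 'a list \<Rightarrow> 'a) \<Rightarrow> 'a set \<Rightarrow> 'a set
    \<Rightarrow> 'f fm \<Rightarrow> ('f fm set \<times> 'f fm) set" where
  "cons_plus ar ops A F \<phi> = {(\<Gamma>, \<psi>). (\<forall>\<gamma>\<in>\<Gamma>. wf_fm ar \<gamma>) \<and> wf_fm ar \<psi> \<and>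
     (\<Gamma> \<union> {subst \<sigma> \<phi> | \<sigma>. \<forall>n. wf_fm ar (\<sigma> n)}, \<psi>) \<in> cons_rel ar ops A F}"

definition maximal_wrt :: "('f \<Rightarrow> nat) \<Rightarrow> ('f \<Rightarrow> 'a list \<Rightarrow> 'a) \<Rightarrow> 'a set \<Rightarrow> 'a set
    \<Rightarrow> 'a set \<Rightarrow> 'a set \<Rightarrow> bool" where
  "maximal_wrt ar ops A1 F1 A2 F2 \<longleftrightarrow>
     cons_rel ar ops A1 F1 \<subset> cons_rel ar ops A2 F2 \<and>
     (\<forall>\<phi>. wf_fm ar \<phi> \<longrightarrow> ({}, \<phi>) \<in> cons_rel ar ops A2 F2 \<longrightarrow>
        ({}, \<phi>) \<notin> cons_rel ar ops A1 F1 \<longrightarrow>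
        cons_plus ar ops A1 F1 \<phi> = cons_rel ar ops A2 F2)"

end

theory Submission
  imports Defs
begin

lemma eval_subst: "eval ops v (subst \<sigma> t) = eval ops (\<lambda>x. eval ops v (\<sigma> x)) t"
proof (induction t)
  case (Var x) then show ?case by simp
next
  case (App f xs) then show ?case by simp (metis (mono_tags, lifting) comp_apply map_eq_conv)
qed
lemma wf_subst: "wf_fm ar t \<Longrightarrow> \<forall>n. wf_fm ar (\<sigma> n) \<Longrightarrow> wf_fm ar (subst \<sigma> t)"
  by (induction t) auto
lemma eval_closed: "closed_alg ar ops A \<Longrightarrow> wf_fm ar t \<Longrightarrow> \<forall>n. v n \<in> A \<Longrightarrow> eval ops v t \<in> A"
proof (induction t)
  case (Var x) then show ?case by simp
next
  case (App f xs)
  then have "set (map (eval ops v) xs) \<subseteq> A" by auto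
  moreover have "length (map (eval ops v) xs) = ar f" using App by simp
  ultimately show ?case using App(2) unfolding closed_alg_def by simp
qed

theorem theorem2p2:
  fixes ar :: "'f \<Rightarrow> nat" and ops :: "'f \<Rightarrow> 'a list \<Rightarrow> 'a"
    and A1 A2 F1 F2 :: "'a set" and zero one :: 'a and a :: "nat \<Rightarrow> 'a" and k n P :: nat
    and top bot :: "'f fm" and \<alpha> :: "nat \<Rightarrow> nat \<Rightarrow> 'f fm"
  assumes alg1: "closed_alg ar ops A1"
    and fin1: "finite A1"
    and F1: "F1 \<noteq> {}" "F1 \<subseteq> A1"
    and sub: "A2 \<subseteq> A1" "closed_alg ar ops A2"
    and F2: "F2 = F1 \<inter> A2" "F2 \<noteq> {}"
    and distinct: "cons_rel ar ops A1 F1 \<noteq> cons_rel ar ops A2 F2"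
    and kn: "k \<le> n"
    and A1_eq: "A1 = {zero, one} \<union> a ` {1..n}"
    and A2_eq: "A2 = {zero, one} \<union> a ` {1..k}"
    and elems_distinct: "zero \<noteq> one" "inj_on a {1..n}" "zero \<notin> a ` {1..n}" "one \<notin> a ` {1..n}"
    and zero_F1: "zero \<notin> F1"
    and one_F2: "one \<in> F2"
    and sub01: "closed_alg ar ops {zero, one}"
    and top: "wf_fm ar top" "vars top \<subseteq> {P}" "\<And>v. (\<forall>m. v m \<in> A1) \<Longrightarrow> eval ops v top = one"
    and bot: "wf_fm ar bot" "vars bot \<subseteq> {P}" "\<And>v. (\<forall>m. v m \<in> A1) \<Longrightarrow> eval ops v bot = zero"
    and alpha: "\<And>i j. k + 1 \<le> i \<Longrightarrow> i \<le> n \<Longrightarrow> 1 \<le> j \<Longrightarrow> j \<le> n \<Longrightarrow> i \<noteq> j \<Longrightarrow>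
        wf_fm ar (\<alpha> i j) \<and> vars (\<alpha> i j) \<subseteq> {P} \<and>
        (\<forall>v. (\<forall>m. v m \<in> A1) \<longrightarrow> v P = a i \<longrightarrow> eval ops v (\<alpha> i j) = a j)"
  shows "maximal_wrt ar ops A1 F1 A2 F2"
  proof -
  have sub12: "cons_rel ar ops A1 F1 \<subseteq> cons_rel ar ops A2 F2"
  proof
    fix x assume x: "x \<in> cons_rel ar ops A1 F1"
    obtain \<Gamma> \<psi> where xe: "x = (\<Gamma>, \<psi>)" by fastforce
    show "x \<in> cons_rel ar ops A2 F2"
      unfolding xe cons_rel_def
    proof (intro CollectI case_prodI conjI allI impI)
      show "\<forall>\<gamma>\<in>\<Gamma>. wf_fm ar \<gamma>" "wf_fm ar \<psi>" using x xe by (auto simp: cons_rel_def)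
      fix v assume v: "\<forall>n. v n \<in> A2" and g: "\<forall>\<gamma>\<in>\<Gamma>. eval ops v \<gamma> \<in> F2"
      have "\<forall>n. v n \<in> A1" using v sub by auto
      moreover have "\<forall>\<gamma>\<in>\<Gamma>. eval ops v \<gamma> \<in> F1" using g F2 by auto
      ultimately have "eval ops v \<psi> \<in> F1" using x xe by (auto simp: cons_rel_def)
      moreover have "eval ops v \<psi> \<in> A2" using eval_closed[OF sub(2) \<open>wf_fm ar \<psi>\<close> v] .
      ultimately show "eval ops v \<psi> \<in> F2" using F2 by auto
    qed
  qed
  have main: "cons_plus ar ops A1 F1 \<phi> = cons_rel ar ops A2 F2"
    if wf\<phi>: "wf_fm ar \<phi>" and val2: "({}, \<phi>) \<in> cons_rel ar ops A2 F2"
      and nval1: "({}, \<phi>) \<notin> cons_rel ar ops A1 F1" for \<phi>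
  proof
    show "cons_plus ar ops A1 F1 \<phi> \<subseteq> cons_rel ar ops A2 F2"
    proof
      fix x assume x: "x \<in> cons_plus ar ops A1 F1 \<phi>"
      obtain \<Gamma> \<psi> where xe: "x = (\<Gamma>, \<psi>)" by fastforce
      have wfs: "\<forall>\<gamma>\<in>\<Gamma>. wf_fm ar \<gamma>" "wf_fm ar \<psi>" using x xe by (auto simp: cons_plus_def)
      have C0: "(\<Gamma> \<union> {subst \<sigma> \<phi> | \<sigma>. \<forall>n. wf_fm ar (\<sigma> n)}, \<psi>) \<in> cons_rel ar ops A1 F1"
        using x unfolding xe cons_plus_def mem_Collect_eq case_prod_conv by blast
      have C: "\<forall>v. (\<forall>n. v n \<in> A1) \<longrightarrow> (\<forall>\<gamma>\<in>\<Gamma> \<union> {subst \<sigma> \<phi> | \<sigma>. \<forall>n. wf_fm ar (\<sigma> n)}. eval ops v \<gamma> \<in> F1) \<longrightarrow> eval ops v \<psi> \<in> F1"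
        using C0 unfolding cons_rel_def mem_Collect_eq case_prod_conv by blast
      show "x \<in> cons_rel ar ops A2 F2"
        unfolding xe cons_rel_def
      proof (intro CollectI case_prodI conjI allI impI)
        show "\<forall>\<gamma>\<in>\<Gamma>. wf_fm ar \<gamma>" "wf_fm ar \<psi>" by (fact wfs)+
        fix v assume v: "\<forall>n. v n \<in> A2" and g: "\<forall>\<gamma>\<in>\<Gamma>. eval ops v \<gamma> \<in> F2"
        have v1: "\<forall>n. v n \<in> A1" using v sub by auto
        have "\<forall>\<gamma>\<in>\<Gamma> \<union> {subst \<sigma> \<phi> | \<sigma>. \<forall>n. wf_fm ar (\<sigma> n)}. eval ops v \<gamma> \<in> F1"
        proof
          fix \<gamma> assume "\<gamma> \<in> \<Gamma> \<union> {subst \<sigma> \<phi> | \<sigma>. \<forall>n. wf_fm ar (\<sigma> n)}"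
          then show "eval ops v \<gamma> \<in> F1"
          proof
            assume "\<gamma> \<in> \<Gamma>" then show ?thesis using g F2 by auto
          next
            assume "\<gamma> \<in> {subst \<sigma> \<phi> | \<sigma>. \<forall>n. wf_fm ar (\<sigma> n)}"
            then obtain \<sigma> where ge: "\<gamma> = subst \<sigma> \<phi>" and ws: "\<forall>n. wf_fm ar (\<sigma> n)" by auto
            have h1: "\<forall>n. eval ops v (\<sigma> n) \<in> A2" using eval_closed[OF sub(2) _ v] ws by blast
            have h2: "\<forall>u. (\<forall>n. u n \<in> A2) \<longrightarrow> eval ops u \<phi> \<in> F2" using val2 unfolding cons_rel_def by simp
            have "eval ops (\<lambda>x. eval ops v (\<sigma> x)) \<phi> \<in> F2" using h2[rule_format, of "\<lambda>x. eval ops v (\<sigma> x)"] h1 by simp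
            then show ?thesis using ge eval_subst[of ops v \<sigma> \<phi>] F2 by auto
          qed
        qed
        then have "eval ops v \<psi> \<in> F1" using C v1 by blast
        moreover have "eval ops v \<psi> \<in> A2" using eval_closed[OF sub(2) \<open>wf_fm ar \<psi>\<close> v] .
        ultimately show "eval ops v \<psi> \<in> F2" using F2 by auto
      qed
    qed
  next
    obtain w where w1: "\<forall>n. w n \<in> A1" and wF: "eval ops w \<phi> \<notin> F1"
      using nval1 wf\<phi> by (auto simp: cons_rel_def)
    show "cons_rel ar ops A2 F2 \<subseteq> cons_plus ar ops A1 F1 \<phi>"
    proof
      fix x assume x: "x \<in> cons_rel ar ops A2 F2"
      obtain \<Gamma> \<psi> where xe: "x = (\<Gamma>, \<psi>)" by fastforce
      have wfs: "\<forall>\<gamma>\<in>\<Gamma>. wf_fm ar \<gamma>" "wf_fm ar \<psi>" using x xe by (auto simp: cons_rel_def)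
      show "x \<in> cons_plus ar ops A1 F1 \<phi>"
        unfolding xe cons_plus_def cons_rel_def
      proof (intro CollectI case_prodI conjI allI impI)
        show "\<forall>\<gamma>\<in>\<Gamma>. wf_fm ar \<gamma>" "wf_fm ar \<psi>" by (fact wfs)+
        then show "\<forall>\<gamma>\<in>\<Gamma> \<union> {subst \<sigma> \<phi> | \<sigma>. \<forall>n. wf_fm ar (\<sigma> n)}. wf_fm ar \<gamma>"
          using wf_subst wf\<phi> by auto
        show "wf_fm ar \<psi>" by (fact wfs(2))
        fix v assume v1: "\<forall>n. v n \<in> A1"
          and g: "\<forall>\<gamma>\<in>\<Gamma> \<union> {subst \<sigma> \<phi> | \<sigma>. \<forall>n. wf_fm ar (\<sigma> n)}. eval ops v \<gamma> \<in> F1"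
        have v2: "\<forall>m. v m \<in> A2"
        proof (rule ccontr)
          assume "\<not> (\<forall>m. v m \<in> A2)"
          then obtain m where "v m \<notin> A2" by auto
          then obtain i where i: "k + 1 \<le> i" "i \<le> n" "v m = a i"
          proof -
            have "v m \<in> a ` {1..n}" using v1[rule_format, of m] \<open>v m \<notin> A2\<close> A1_eq A2_eq by auto
            then obtain i where i: "i \<in> {1..n}" "v m = a i" by blast
            have "\<not> i \<le> k" using i \<open>v m \<notin> A2\<close> A2_eq by auto
            then show ?thesis using that[of i] i by simp
          qed
          define S :: "'f fm \<Rightarrow> 'f fm" where "S = subst (\<lambda>_::nat. Var m)"
          have evS: "eval ops v (S t) = eval ops (\<lambda>_. v m) t" for t
            unfolding S_def eval_subst by simp
          have wfS: "wf_fm ar t \<Longrightarrow> wf_fm ar (S t)" for t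
            unfolding S_def by (rule wf_subst) auto
          have c1: "\<forall>x::nat. (\<lambda>_. v m) x \<in> A1" using v1 by auto
          define \<sigma> where "\<sigma> x = (if w x = zero then S bot else if w x = one then S top
             else if w x = v m then Var m else S (\<alpha> i (inv_into {1..n} a (w x))))" for x
          have key: "wf_fm ar (\<sigma> x) \<and> eval ops v (\<sigma> x) = w x" for x
          proof -
            consider "w x = zero" | "w x = one" | "w x = v m" |
              j where "j \<in> {1..n}" "w x = a j" "w x \<noteq> zero" "w x \<noteq> one" "w x \<noteq> v m"
              using w1[rule_format, of x] unfolding A1_eq by blast
            then show ?thesis
            proof cases
              case 1 then show ?thesis using evS bot(3)[OF c1] wfS bot(1) by (simp add: \<sigma>_def)
            next
              case 2 then show ?thesis using evS top(3)[OF c1] wfS top(1) elems_distinct(1)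
                by (simp add: \<sigma>_def)
            next
              case 3 then show ?thesis using elems_distinct i by (auto simp: \<sigma>_def)
            next
              case (4 j)
              have ij: "i \<noteq> j" using 4 i by auto
              have inv: "inv_into {1..n} a (w x) = j" using 4 elems_distinct(2) by simp
              have "wf_fm ar (\<alpha> i j) \<and> eval ops (\<lambda>_. v m) (\<alpha> i j) = a j"
                using alpha[OF i(1,2) _ _ ij] 4(1) c1 i(3) by auto
              then show ?thesis using 4 inv evS wfS by (simp add: \<sigma>_def)
            qed
          qed
          have "subst \<sigma> \<phi> \<in> {subst \<sigma> \<phi> | \<sigma>. \<forall>n. wf_fm ar (\<sigma> n)}" using key by auto
          then have "eval ops v (subst \<sigma> \<phi>) \<in> F1" using g by auto
          moreover have "eval ops v (subst \<sigma> \<phi>) = eval ops w \<phi>"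
            unfolding eval_subst using key by (metis (no_types, lifting) ext)
          ultimately show False using wF by simp
        qed
        have "\<forall>\<gamma>\<in>\<Gamma>. eval ops v \<gamma> \<in> F2"
          using g eval_closed[OF sub(2) _ v2] wfs F2 by auto
        then have "eval ops v \<psi> \<in> F2" using x xe v2 by (auto simp: cons_rel_def)
        then show "eval ops v \<psi> \<in> F1" using F2 by auto
      qed
    qed
  qed
  show ?thesis unfolding maximal_wrt_def using sub12 distinct main by blast
qed


end
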